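(* Let $E$ be a finite-dimensional complex Hilbert space, $e\in E$ a unit vector, $0<\tau<1$, and define $$\Phi(S):=S^{1/2}\bigl(I_E-\tau|e\rangle\langle e|\bigr)S^{1/2},\qquad S\in B(E)_+.$$ For $S\in B(E)_+$ the following are equivalent: (1) $\Phi(S)=S$; (2) $S^{1/2}e=0$; (3) $Se=0$; (4) $\mathrm{ran}(S)\subseteq e^\perp$. In particular, every positive operator supported on $e^\perp$ is a fixed point of $\Phi$. Consequently, for any $T_0\in B(E)_+$, with $T_{n+1}:=\Phi(T_n)$ and $T_\infty:=\lim_nT_n$, the limit $T_\infty$ is a fixed point of $\Phi$, and therefore $T_\infty e=0$ and $\mathrm{ran}(T_\infty)\subseteq e^\perp$.
   Context: For vectors $x,y$, $|x\rangle\langle y|$ denotes the operator $z\mapsto\langle y,z\rangle x$. $B(E)_+$ denotes positive operators; $S^{1/2}$ is the positive square root. The sequence $T_n$ is decreasing in the operator order, so its norm limit exists. *)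

theory Defs
  imports "HOL-Analysis.Analysis"
begin

text \<open>E = complex^'n (finite-dimensional complex Hilbert space), operators = complex^'n^'n.\<close>

definition cinner :: "complex^'n \<Rightarrow> complex^'n \<Rightarrow> complex" where
  "cinner x y = (\<Sum>i\<in>UNIV. cnj (x$i) * y$i)"

definition adjoint_op :: "complex^'n^'n \<Rightarrow> complex^'n^'n" where
  "adjoint_op A = (\<chi> i j. cnj (A$j$i))"

definition positive_op :: "complex^'n^'n \<Rightarrow> bool" where
  "positive_op A \<longleftrightarrow> adjoint_op A = A \<and> (\<forall>x. 0 \<le> Re (cinner x (A *v x)))"

definition sqrt_op :: "complex^'n^'n \<Rightarrow> complex^'n^'n" where
  "sqrt_op S = (THE R. positive_op R \<and> R ** R = S)"

text \<open>ketbra x y is the operator z \<mapsto> cinner y z * x.\<close>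
definition ketbra :: "complex^'n \<Rightarrow> complex^'n \<Rightarrow> complex^'n^'n" where
  "ketbra x y = (\<chi> i j. x$i * cnj (y$j))"

definition Phi :: "real \<Rightarrow> complex^'n \<Rightarrow> complex^'n^'n \<Rightarrow> complex^'n^'n" where
  "Phi \<tau> e S = sqrt_op S ** (mat 1 - \<tau> *\<^sub>R ketbra e e) ** sqrt_op S"

definition orth_compl :: "complex^'n \<Rightarrow> (complex^'n) set" where
  "orth_compl e = {x. cinner e x = 0}"

end

theory Submission
  imports Defs
begin




lemma cinner_Re: "Re (cinner x y) = inner x y"
  by (simp add: cinner_def inner_vec_def inner_complex_def Re_sum)

lemma cinner_commute: "cinner y x = cnj (cinner x y)"
  by (simp add: cinner_def cnj_sum mult.commute)

lemma cinner_self: "cinner x x = of_real ((norm x)^2)"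
proof (rule complex_eqI)
  show "Re (cinner x x) = Re (of_real ((norm x)^2))"
    by (simp add: cinner_Re power2_norm_eq_inner)
  show "Im (cinner x x) = Im (of_real ((norm x)^2))"
    by (simp add: cinner_def Im_sum)
qed

lemma cinner_zero_iff: "cinner x x = 0 \<longleftrightarrow> x = 0"
  by (simp add: cinner_self)

lemma cinner_add_right: "cinner x (y + z) = cinner x y + cinner x z"
  by (simp add: cinner_def distrib_left sum.distrib)
lemma cinner_add_left: "cinner (x + y) z = cinner x z + cinner y z"
  by (simp add: cinner_def distrib_right sum.distrib)
lemma cinner_diff_right: "cinner x (y - z) = cinner x y - cinner x z"
  by (simp add: cinner_def right_diff_distrib sum_subtractf)
lemma cinner_diff_left: "cinner (x - y) z = cinner x z - cinner y z"
  by (simp add: cinner_def left_diff_distrib sum_subtractf)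
lemma sR: "r *\<^sub>R (z::complex) = of_real r * z" by (simp add: scaleR_conv_of_real)
lemma cinner_scaleR_right: "cinner x (r *\<^sub>R y) = of_real r * cinner x y"
  by (simp add: cinner_def sum_distrib_left sR mult_ac)
lemma cinner_scaleR_left: "cinner (r *\<^sub>R x) y = of_real r * cinner x y"
  by (simp add: cinner_def sum_distrib_left sR mult_ac)
lemma cinner_smult_right: "cinner x (c *s y) = c * cinner x y"
  by (simp add: cinner_def sum_distrib_left mult_ac)
lemma cinner_smult_left: "cinner (c *s x) y = cnj c * cinner x y"
  by (simp add: cinner_def sum_distrib_left mult_ac)
lemma cinner_zero_right[simp]: "cinner x 0 = 0" by (simp add: cinner_def)
lemma cinner_zero_left[simp]: "cinner 0 x = 0" by (simp add: cinner_def)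

lemma cinner_adjoint: "cinner x (A *v y) = cinner (adjoint_op A *v x) y"
  unfolding cinner_def adjoint_op_def matrix_vector_mult_def
  apply (simp add: cnj_sum sum_distrib_left sum_distrib_right mult_ac)
  by (rule sum.swap)

lemma ketbra_apply: "ketbra x y *v z = cinner y z *s x"
  by (simp add: ketbra_def cinner_def matrix_vector_mult_def vec_eq_iff sum_distrib_left mult_ac)

lemma mv_scaleR: "(A::complex^'n^'m) *v (r *\<^sub>R x) = r *\<^sub>R (A *v x)"
  by (simp add: matrix_vector_mult_def vec_eq_iff sum_distrib_left sR mult_ac)
lemma scaleR_mv: "(r *\<^sub>R (A::complex^'n^'m)) *v x = r *\<^sub>R (A *v x)"
  by (simp add: matrix_vector_mult_def vec_eq_iff sum_distrib_left sR mult_ac)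
lemma mv_smult: "(A::complex^'n^'m) *v (c *s x) = c *s (A *v x)"
  by (simp add: matrix_vector_mult_def vec_eq_iff sum_distrib_left mult_ac)

lemma adjoint_ketbra: "adjoint_op (ketbra x y) = ketbra y x"
  by (simp add: adjoint_op_def ketbra_def vec_eq_iff mult.commute)
lemma adjoint_add: "adjoint_op (A + B) = adjoint_op A + adjoint_op B"
  by (simp add: adjoint_op_def vec_eq_iff)
lemma adjoint_diff: "adjoint_op (A - B) = adjoint_op A - adjoint_op B"
  by (simp add: adjoint_op_def vec_eq_iff)
lemma adjoint_scaleR: "adjoint_op (r *\<^sub>R A) = r *\<^sub>R adjoint_op A"
  by (simp add: adjoint_op_def vec_eq_iff sR)
lemma adjoint_sum: "adjoint_op (sum f I) = sum (\<lambda>i. adjoint_op (f i)) I"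
  by (simp add: adjoint_op_def vec_eq_iff sum_component cnj_sum)

lemma herm_inner:
  assumes "adjoint_op A = A"
  shows "inner x (A *v y) = inner (A *v x) y"
  by (metis assms cinner_Re cinner_adjoint)

lemma herm_cinner:
  assumes "adjoint_op A = A"
  shows "cinner x (A *v y) = cinner (A *v x) y"
  by (metis assms cinner_adjoint)

lemma quad_zero:
  fixes a b :: real
  assumes "\<And>t. 0 \<le> 2*t*a + t^2*b" shows "a = 0"
proof (rule ccontr)
  assume a: "a \<noteq> 0"
  obtain c where c: "c > 0" "b < c" by (rule that[of "\<bar>b\<bar> + 1"]) auto
  define t where "t = - a / c"
  have h: "0 \<le> 2*t*a + t^2*b" by (rule assms)
  have eq: "c^2 * (2*t*a + t^2*b) = a^2 * (b - 2*c)"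
    using c by (simp add: t_def field_simps power2_eq_square)
  have "a^2 * (b - 2*c) < 0" using a c by (intro mult_pos_neg) auto
  moreover have "c^2 * (2*t*a + t^2*b) \<ge> 0" using h by simp
  ultimately show False using eq by simp
qed

lemma cont_q: "continuous_on S (\<lambda>y::complex^'n. inner y ((A::complex^'n^'n) *v y))"
proof -
  have "bounded_linear (\<lambda>y::complex^'n. A *v y)"
    using matrix_vector_mul_linear linear_conv_bounded_linear by blast
  then have "continuous_on S (\<lambda>y::complex^'n. A *v y)" by (rule linear_continuous_on)
  then show ?thesis by (intro continuous_intros)
qed

lemma q_scale: "inner (r *\<^sub>R y) ((A::complex^'n^'n) *v (r *\<^sub>R y)) = r^2 * inner y (A *v y)"
  by (simp add: mv_scaleR power2_eq_square)





lemma herm_eig_pos: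
  fixes S :: "complex^'n^'n"
  assumes h: "adjoint_op S = S" and x: "inner x (S *v x) > 0"
  shows "\<exists>v \<mu>. norm v = 1 \<and> \<mu> > 0 \<and> S *v v = \<mu> *\<^sub>R v"
proof -
  let ?q = "\<lambda>y. inner y (S *v y)"
  have x0: "x \<noteq> 0" using x by auto
  have ne: "sphere (0::complex^'n) 1 \<noteq> {}"
  proof -
    have "(1 / norm x) *\<^sub>R x \<in> sphere (0::complex^'n) 1" using x0 by simp
    then show ?thesis by blast
  qed
  obtain v where v: "v \<in> sphere 0 1" and vmax: "\<forall>y\<in>sphere 0 1. ?q y \<le> ?q v"
    using continuous_attains_sup[OF compact_sphere ne cont_q] by blast
  define M where "M = ?q v"
  have nv: "norm v = 1" using v by simp
  have bound: "?q y \<le> M * (norm y)^2" for y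
  proof (cases "y = 0")
    case True then show ?thesis by simp
  next
    case False
    define u where "u = (1 / norm y) *\<^sub>R y"
    have u: "u \<in> sphere 0 1" using False by (simp add: u_def)
    have yu: "y = norm y *\<^sub>R u" using False by (simp add: u_def)
    have "?q y = ?q (norm y *\<^sub>R u)" using yu by (rule arg_cong)
    also have "\<dots> = (norm y)^2 * ?q u" by (rule q_scale)
    finally have "?q y = (norm y)^2 * ?q u" .
    also have "\<dots> \<le> (norm y)^2 * M" using vmax u by (simp add: M_def mult_left_mono)
    finally show ?thesis by (simp add: mult.commute)
  qed
  have "?q x \<le> M * (norm x)^2" by (rule bound)
  with x have "0 < M * (norm x)^2" by linarith
  with x0 have Mpos: "M > 0" by (auto simp: zero_less_mult_iff)
  define w where "w = S *v v - M *\<^sub>R v"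
  have "\<And>t. 0 \<le> 2*t*(- inner w w) + t^2*(M * inner w w - ?q w)"
  proof -
    fix t :: real
    have b: "?q (v + t *\<^sub>R w) \<le> M * (norm (v + t *\<^sub>R w))^2" by (rule bound)
    have e1: "?q (v + t *\<^sub>R w) = ?q v + 2*t*inner w (S *v v) + t^2 * ?q w"
      using herm_inner[OF h, of v w]
      by (simp add: matrix_vector_right_distrib mv_scaleR inner_add_left inner_add_right
          power2_eq_square inner_commute algebra_simps)
    have e2: "(norm (v + t *\<^sub>R w))^2 = 1 + 2*t*inner v w + t^2 * inner w w"
    proof -
      have vv: "inner v v = 1" using nv by (simp add: power2_norm_eq_inner[symmetric])
      have "(norm (v + t *\<^sub>R w))^2 = inner (v + t *\<^sub>R w) (v + t *\<^sub>R w)"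
        by (rule power2_norm_eq_inner)
      also have "\<dots> = 1 + 2*t*inner v w + t^2 * inner w w"
        using vv by (simp add: inner_add_left inner_add_right
          power2_eq_square inner_commute algebra_simps)
      finally show ?thesis .
    qed
    have e3: "inner w w = inner w (S *v v) - M * inner v w"
    proof -
      have "inner w w = inner w (S *v v - M *\<^sub>R v)" by (simp only: w_def)
      also have "\<dots> = inner w (S *v v) - M * inner v w" by (simp add: inner_diff_right inner_commute)
      finally show ?thesis .
    qed
    show "0 \<le> 2*t*(- inner w w) + t^2*(M * inner w w - ?q w)"
      using b unfolding e1 e2 M_def[symmetric] e3 by (simp add: algebra_simps)
  qed
  then have "- inner w w = 0" by (rule quad_zero)
  then have "w = 0" by simp
  then have "S *v v = M *\<^sub>R v" by (simp add: w_def)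
  with nv Mpos show ?thesis by blast
qed

lemma herm_zero:
  fixes S :: "complex^'n^'n"
  assumes h: "adjoint_op S = S" and q: "\<forall>x. inner x (S *v x) = 0"
  shows "S = 0"
proof -
  have "inner x (S *v y) = 0" for x y
  proof -
    have "inner (x + y) (S *v (x + y)) - inner (x - y) (S *v (x - y)) = 4 * inner x (S *v y)"
      using herm_inner[OF h, of x y]
      by (simp add: matrix_vector_right_distrib matrix_vector_mult_diff_distrib inner_add_left
          inner_add_right inner_diff_left inner_diff_right inner_commute algebra_simps)
    then show ?thesis using q by simp
  qed
  then have "S *v y = 0" for y using inner_eq_zero_iff[of "S *v y"] by simp
  then show ?thesis by (simp add: matrix_eq)
qed

lemma herm_eig:
  fixes S :: "complex^'n^'n"
  assumes h: "adjoint_op S = S" and nz: "S \<noteq> 0"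
  shows "\<exists>v \<mu>. norm v = 1 \<and> \<mu> \<noteq> 0 \<and> S *v v = \<mu> *\<^sub>R v"
proof -
  obtain x where x: "inner x (S *v x) \<noteq> 0" using herm_zero[OF h] nz by blast
  show ?thesis
  proof (cases "inner x (S *v x) > 0")
    case True
    then obtain v \<mu> where "norm v = 1" "\<mu> > 0" "S *v v = \<mu> *\<^sub>R v"
      using herm_eig_pos[OF h] by blast
    then show ?thesis by (intro exI[of _ v] exI[of _ \<mu>]) simp
  next
    case False
    have neg: "(- S) *v x = - (S *v x)" by (simp add: matrix_vector_mult_def vec_eq_iff sum_negf)
    from False x have "inner x ((- S) *v x) > 0"
      by (simp add: neg inner_minus_right)
    moreover have "adjoint_op (- S) = - S" using h by (simp add: adjoint_op_def vec_eq_iff)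
    ultimately obtain v \<mu> where "norm v = 1" "\<mu> > 0" "(- S) *v v = \<mu> *\<^sub>R v"
      using herm_eig_pos by blast
    moreover have "(- S) *v v = - (S *v v)" by (simp add: matrix_vector_mult_def vec_eq_iff sum_negf)
    ultimately have "S *v v = (- \<mu>) *\<^sub>R v" "- \<mu> \<noteq> 0"
      by (metis minus_minus scaleR_minus_left, simp)
    then show ?thesis using \<open>norm v = 1\<close> by (intro exI[of _ v] exI[of _ "- \<mu>"]) simp
  qed
qed

lemma pos_null:
  fixes R :: "complex^'n^'n"
  assumes h: "adjoint_op R = R" and p: "\<forall>x. 0 \<le> inner x (R *v x)" and z: "inner v (R *v v) = 0"
  shows "R *v v = 0"
proof -
  let ?w = "R *v v"
  have "\<And>t. 0 \<le> 2*t*inner ?w ?w + t^2*inner ?w (R *v ?w)"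
  proof -
    fix t :: real
    have "0 \<le> inner (v + t *\<^sub>R ?w) (R *v (v + t *\<^sub>R ?w))" using p by (rule spec)
    also have "\<dots> = inner v (R *v v) + 2*t*inner ?w (R *v v) + t^2 * inner ?w (R *v ?w)"
      using herm_inner[OF h, of v ?w]
      by (simp add: matrix_vector_right_distrib mv_scaleR inner_add_left inner_add_right
          power2_eq_square inner_commute algebra_simps)
    finally show "0 \<le> 2*t*inner ?w ?w + t^2*inner ?w (R *v ?w)" using z by simp
  qed
  then have "inner ?w ?w = 0" by (rule quad_zero)
  then show ?thesis by simp
qed





definition ker :: "complex^'n^'n \<Rightarrow> (complex^'n) set" where "ker S = {x. S *v x = 0}"

lemma subspace_ker: "subspace (ker S)"
  unfolding ker_def subspace_def by (simp add: matrix_vector_right_distrib mv_scaleR)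

lemma matrix_add_rdistrib': "((A::complex^'n^'m) + B) ** C = A ** C + B ** C"
  by (simp add: matrix_matrix_mult_def vec_eq_iff distrib_right sum.distrib)

lemma matrix_sum_left: "finite I \<Longrightarrow> (sum f I) ** (B::complex^'n^'n) = sum (\<lambda>i. f i ** B) I"
  by (induction I rule: finite_induct) (simp_all add: matrix_add_rdistrib')

lemma matrix_sum_right: "finite I \<Longrightarrow> (B::complex^'n^'n) ** (sum f I) = sum (\<lambda>i. B ** f i) I"
  by (induction I rule: finite_induct) (simp_all add: matrix_add_ldistrib)

lemma mv_sum_left: "finite I \<Longrightarrow> (sum f I) *v (x::complex^'n) = sum (\<lambda>i. f i *v x) I"
  by (induction I rule: finite_induct) (simp_all add: matrix_vector_mult_add_rdistrib)

lemma ketbra_mult: "ketbra a b ** ketbra c d = ketbra (cinner b c *s a) d"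
  by (simp add: ketbra_def matrix_matrix_mult_def cinner_def vec_eq_iff sum_distrib_left
      sum_distrib_right mult_ac)

lemma ketbra_pos: "0 \<le> inner x (ketbra u u *v x)"
proof -
  have "inner x (ketbra u u *v x) = Re (cinner u x * cnj (cinner u x))"
    by (simp add: ketbra_apply cinner_Re[symmetric] cinner_smult_right cinner_commute[of x u])
  also have "\<dots> = (cmod (cinner u x))^2" by (simp add: complex_norm_square[symmetric])
  finally show ?thesis by simp
qed

definition decomp :: "complex^'n^'n \<Rightarrow> nat \<Rightarrow> (nat \<Rightarrow> complex^'n) \<Rightarrow> (nat \<Rightarrow> real) \<Rightarrow> bool" where
  "decomp S m v \<mu> \<longleftrightarrow> (\<forall>i<m. \<forall>j<m. cinner (v i) (v j) = (if i = j then 1 else 0))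
     \<and> (\<forall>i<m. \<mu> i \<noteq> 0) \<and> S = (\<Sum>i<m. \<mu> i *\<^sub>R ketbra (v i) (v i))"

lemma decomp_apply:
  assumes d: "decomp S m v \<mu>" and j: "j < m"
  shows "S *v v j = \<mu> j *\<^sub>R v j"
proof -
  have "S *v v j = (\<Sum>i<m. \<mu> i *\<^sub>R (cinner (v i) (v j) *s v i))"
    using d by (simp add: decomp_def mv_sum_left scaleR_mv ketbra_apply)
  also have "\<dots> = (\<Sum>i<m. if i = j then \<mu> j *\<^sub>R v j else 0)"
    using d j by (intro sum.cong) (auto simp: decomp_def)
  also have "\<dots> = \<mu> j *\<^sub>R v j" using j by simp
  finally show ?thesis .
qed

lemma spectral:
  fixes S :: "complex^'n^'n"
  assumes "adjoint_op S = S"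
  shows "\<exists>m v \<mu>. decomp S m v \<mu>"
  using assms
proof (induction "DIM(complex^'n) - dim (ker S)" arbitrary: S rule: less_induct)
  case less
  note h = less.prems
  show ?case
  proof (cases "S = 0")
    case True
    then have "decomp S 0 (\<lambda>_. 0) (\<lambda>_. 0)" by (simp add: decomp_def)
    then show ?thesis by blast
  next
    case False
    obtain v \<mu> where nv: "norm v = 1" and mu: "\<mu> \<noteq> 0" and Sv: "S *v v = \<mu> *\<^sub>R v"
      using herm_eig[OF h False] by blast
    have vv: "cinner v v = 1" using nv by (simp add: cinner_self)
    define S' where "S' = S - \<mu> *\<^sub>R ketbra v v"
    have hS': "adjoint_op S' = S'"
      using h by (simp add: S'_def adjoint_diff adjoint_scaleR adjoint_ketbra)
    have S'v: "S' *v v = 0"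
      by (simp add: S'_def matrix_vector_mult_diff_rdistrib scaleR_mv ketbra_apply vv Sv)
    have orth_ker: "cinner v x = 0" if "S *v x = 0" for x
    proof -
      have "of_real \<mu> * cinner v x = cinner (S *v v) x" by (simp add: Sv cinner_scaleR_left)
      also have "\<dots> = cinner v (S *v x)" using herm_cinner[OF h] by simp
      finally show ?thesis using that mu by simp
    qed
    have sub: "ker S \<subset> ker S'"
    proof
      show "ker S \<subseteq> ker S'"
        using orth_ker by (auto simp: ker_def S'_def matrix_vector_mult_diff_rdistrib scaleR_mv ketbra_apply)
      have "v \<in> ker S'" using S'v by (simp add: ker_def)
      moreover have "v \<notin> ker S" using mu nv Sv by (auto simp: ker_def)
      ultimately show "ker S \<noteq> ker S'" by blast
    qed
    have "dim (ker S) < dim (ker S')"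
      using sub by (intro dim_psubset) (simp add: span_eq_iff[THEN iffD2, OF subspace_ker])
    moreover have "dim (ker S') \<le> DIM(complex^'n)" by (rule dim_subset_UNIV)
    ultimately have less': "DIM(complex^'n) - dim (ker S') < DIM(complex^'n) - dim (ker S)" by linarith
    obtain m w \<nu> where d: "decomp S' m w \<nu>" using less.hyps[OF less' hS'] by blast
    have ow: "cinner v (w j) = 0" if j: "j < m" for j
    proof -
      have "of_real (\<nu> j) * cinner v (w j) = cinner v (S' *v w j)"
        by (simp add: decomp_apply[OF d j] cinner_scaleR_right)
      also have "\<dots> = 0" using herm_cinner[OF hS'] S'v by simp
      finally show ?thesis using d j by (simp add: decomp_def)
    qed
    define w' where "w' = w(m := v)"
    define \<nu>' where "\<nu>' = \<nu>(m := \<mu>)"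
    have "decomp S (Suc m) w' \<nu>'"
      unfolding decomp_def
    proof (intro conjI allI impI)
      fix i j assume i: "i < Suc m" and j: "j < Suc m"
      show "cinner (w' i) (w' j) = (if i = j then 1 else 0)"
      proof (cases "i = m"; cases "j = m")
        assume "i = m" "j = m" then show ?thesis by (simp add: w'_def vv)
      next
        assume "i = m" "j \<noteq> m" then show ?thesis using ow j by (simp add: w'_def)
      next
        assume "i \<noteq> m" "j = m" then show ?thesis using ow[of i] i
          by (simp add: w'_def cinner_commute[of "w i" v])
      next
        assume "i \<noteq> m" "j \<noteq> m" then show ?thesis using d i j by (simp add: w'_def decomp_def)
      qed
    next
      fix i assume "i < Suc m" then show "\<nu>' i \<noteq> 0" using d mu by (auto simp: \<nu>'_def decomp_def)
    next
      have "(\<Sum>i<Suc m. \<nu>' i *\<^sub>R ketbra (w' i) (w' i)) = (\<Sum>i<m. \<nu> i *\<^sub>R ketbra (w i) (w i)) + \<mu> *\<^sub>R ketbra v v"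
        by (simp add: w'_def \<nu>'_def)
      also have "\<dots> = S' + \<mu> *\<^sub>R ketbra v v" using d by (simp add: decomp_def)
      also have "\<dots> = S" by (simp add: S'_def)
      finally show "S = (\<Sum>i<Suc m. \<nu>' i *\<^sub>R ketbra (w' i) (w' i))" by simp
    qed
    then show ?thesis by blast
  qed
qed





lemma pos_herm: "positive_op S \<Longrightarrow> adjoint_op S = S"
  by (simp add: positive_op_def)
lemma pos_q: "positive_op S \<Longrightarrow> 0 \<le> inner x (S *v x)"
  by (simp add: positive_op_def cinner_Re[symmetric])
lemma pos_intro: "adjoint_op S = S \<Longrightarrow> (\<And>x. 0 \<le> inner x (S *v x)) \<Longrightarrow> positive_op S"
  by (simp add: positive_op_def cinner_Re)

lemma scaleR_mult_scaleR: "(a *\<^sub>R (A::complex^'n^'n)) ** (b *\<^sub>R B) = (a*b) *\<^sub>R (A ** B)"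
  by (simp add: matrix_matrix_mult_def vec_eq_iff sR sum_distrib_left mult_ac)

lemma ketbra_zero_left[simp]: "ketbra 0 y = 0"
  by (simp add: ketbra_def vec_eq_iff)

lemma sqrt_exists:
  fixes S :: "complex^'n^'n"
  assumes p: "positive_op S"
  shows "\<exists>R. positive_op R \<and> R ** R = S"
proof -
  obtain m v \<mu> where d: "decomp S m v \<mu>" using spectral[OF pos_herm[OF p]] by blast
  have vv: "inner (v i) (v i) = 1" if "i < m" for i
    using d that by (simp add: decomp_def cinner_Re[symmetric])
  have mu: "0 \<le> \<mu> i" if i: "i < m" for i
  proof -
    have "inner (v i) (S *v v i) = \<mu> i" using decomp_apply[OF d i] vv[OF i] by simp
    then show ?thesis using pos_q[OF p, of "v i"] by simp
  qed
  define R where "R = (\<Sum>i<m. sqrt (\<mu> i) *\<^sub>R ketbra (v i) (v i))"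
  have hR: "adjoint_op R = R" by (simp add: R_def adjoint_sum adjoint_scaleR adjoint_ketbra)
  have qR: "0 \<le> inner x (R *v x)" for x
  proof -
    have "inner x (R *v x) = (\<Sum>i<m. sqrt (\<mu> i) * inner x (ketbra (v i) (v i) *v x))"
      by (simp add: R_def mv_sum_left scaleR_mv inner_sum_right)
    also have "\<dots> \<ge> 0" using mu ketbra_pos by (intro sum_nonneg mult_nonneg_nonneg) auto
    finally show ?thesis .
  qed
  have KK: "ketbra (v i) (v i) ** ketbra (v j) (v j) = (if i = j then ketbra (v i) (v i) else 0)"
    if "i < m" "j < m" for i j
    using d that by (simp add: ketbra_mult decomp_def)
  have "R ** R = (\<Sum>j<m. \<Sum>i<m. (sqrt (\<mu> i) * sqrt (\<mu> j)) *\<^sub>R (ketbra (v i) (v i) ** ketbra (v j) (v j)))"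
    by (simp add: R_def matrix_sum_left matrix_sum_right scaleR_mult_scaleR)
  also have "\<dots> = (\<Sum>j<m. \<Sum>i<m. if i = j then \<mu> i *\<^sub>R ketbra (v i) (v i) else 0)"
    using mu KK by (intro sum.cong refl) (auto simp: real_sqrt_mult[symmetric])
  also have "\<dots> = S" using d by (simp add: decomp_def)
  finally have "R ** R = S" .
  with hR qR show ?thesis using pos_intro by blast
qed

lemma sqrt_unique:
  fixes R1 R2 :: "complex^'n^'n"
  assumes p1: "positive_op R1" and p2: "positive_op R2" and eq: "R1 ** R1 = R2 ** R2"
  shows "R1 = R2"
proof (rule ccontr)
  assume ne: "R1 \<noteq> R2"
  have h1: "adjoint_op R1 = R1" and h2: "adjoint_op R2 = R2" using p1 p2 by (simp_all add: pos_herm)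
  have hD: "adjoint_op (R1 - R2) = R1 - R2" using h1 h2 by (simp add: adjoint_diff)
  obtain v \<mu> where nv: "norm v = 1" and mu: "\<mu> \<noteq> 0" and Dv: "(R1 - R2) *v v = \<mu> *\<^sub>R v"
    using herm_eig[OF hD] ne by auto
  have R1v: "R1 *v v = R2 *v v + \<mu> *\<^sub>R v" using Dv by (simp add: matrix_vector_mult_diff_rdistrib algebra_simps)
  have "inner v (R1 *v (R1 *v v)) = inner v (R2 *v (R2 *v v))"
    using eq by (simp add: matrix_vector_mul_assoc)
  moreover have "inner v (R1 *v (R1 *v v)) = inner v (R1 *v (R2 *v v)) + \<mu> * inner v (R1 *v v)"
    by (simp add: R1v matrix_vector_right_distrib mv_scaleR inner_add_right)
  moreover have "inner v (R1 *v (R2 *v v)) = inner v (R2 *v (R2 *v v)) + \<mu> * inner v (R2 *v v)"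
  proof -
    have "inner v (R1 *v (R2 *v v)) = inner (R1 *v v) (R2 *v v)" by (rule herm_inner[OF h1])
    also have "\<dots> = inner (R2 *v v) (R2 *v v) + \<mu> * inner v (R2 *v v)"
      by (simp add: R1v inner_add_left)
    also have "inner (R2 *v v) (R2 *v v) = inner v (R2 *v (R2 *v v))" by (rule herm_inner[OF h2, symmetric])
    finally show ?thesis .
  qed
  ultimately have "\<mu> * (inner v (R1 *v v) + inner v (R2 *v v)) = 0" by (simp add: algebra_simps)
  with mu have s: "inner v (R1 *v v) + inner v (R2 *v v) = 0" by simp
  have q1: "inner v (R1 *v v) = 0" and q2: "inner v (R2 *v v) = 0"
    using s pos_q[OF p1, of v] pos_q[OF p2, of v] by linarith+
  have "R1 *v v = 0" using pos_null[OF h1 _ q1] pos_q[OF p1] by blast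
  moreover have "R2 *v v = 0" using pos_null[OF h2 _ q2] pos_q[OF p2] by blast
  ultimately have "\<mu> *\<^sub>R v = 0" using Dv by (simp add: matrix_vector_mult_diff_rdistrib)
  with mu nv show False by simp
qed

lemma sqrt_op:
  fixes S :: "complex^'n^'n"
  assumes p: "positive_op S"
  shows "positive_op (sqrt_op S) \<and> sqrt_op S ** sqrt_op S = S"
proof -
  have "\<exists>!R. positive_op R \<and> R ** R = S"
    using sqrt_exists[OF p] sqrt_unique by blast
  then show ?thesis unfolding sqrt_op_def by (rule theI')
qed





lemma Phi_formula:
  fixes S :: "complex^'n^'n"
  assumes p: "positive_op S"
  shows "Phi \<tau> e S = S - \<tau> *\<^sub>R ketbra (sqrt_op S *v e) (sqrt_op S *v e)"
proof -
  let ?R = "sqrt_op S"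
  have pR: "positive_op ?R" and RR: "?R ** ?R = S" using sqrt_op[OF p] by auto
  have hR: "adjoint_op ?R = ?R" using pR by (rule pos_herm)
  show ?thesis
  proof (subst matrix_eq, intro allI)
    fix x
    have "Phi \<tau> e S *v x = ?R *v ((mat 1 - \<tau> *\<^sub>R ketbra e e) *v (?R *v x))"
      by (simp only: Phi_def matrix_vector_mul_assoc matrix_mul_assoc)
    also have "\<dots> = ?R *v (?R *v x - \<tau> *\<^sub>R (cinner e (?R *v x) *s e))"
      by (simp add: matrix_vector_mult_diff_rdistrib scaleR_mv ketbra_apply)
    also have "\<dots> = ?R *v (?R *v x) - \<tau> *\<^sub>R (cinner e (?R *v x) *s (?R *v e))"
      by (simp add: matrix_vector_mult_diff_distrib mv_scaleR mv_smult)
    also have "\<dots> = S *v x - \<tau> *\<^sub>R (cinner e (?R *v x) *s (?R *v e))"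
      by (simp add: matrix_vector_mul_assoc RR)
    also have "\<dots> = (S - \<tau> *\<^sub>R ketbra (?R *v e) (?R *v e)) *v x"
      by (simp add: matrix_vector_mult_diff_rdistrib scaleR_mv ketbra_apply herm_cinner[OF hR])
    finally show "Phi \<tau> e S *v x = (S - \<tau> *\<^sub>R ketbra (?R *v e) (?R *v e)) *v x" .
  qed
qed

lemma ketbra_zero_iff: "ketbra u u = 0 \<longleftrightarrow> u = 0"
proof
  assume "ketbra u u = 0"
  have "cinner u u *s u = ketbra u u *v u" by (simp only: ketbra_apply)
  also have "\<dots> = 0" using \<open>ketbra u u = 0\<close> by simp
  finally have H: "cinner u u *s u = 0" .
  have "cinner u (cinner u u *s u) = cinner u 0" by (simp only: H)
  then have "cinner u u * cinner u u = 0" by (simp add: cinner_smult_right)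
  then show "u = 0" by (simp add: cinner_zero_iff)
qed (simp)

lemma ketbra_q: "inner x (ketbra u u *v x) = (cmod (cinner u x))^2"
proof -
  have "inner x (ketbra u u *v x) = Re (cinner u x * cnj (cinner u x))"
    by (simp add: ketbra_apply cinner_Re[symmetric] cinner_smult_right cinner_commute[of x u])
  also have "\<dots> = (cmod (cinner u x))^2" by (simp add: complex_norm_square[symmetric])
  finally show ?thesis .
qed

lemma part1:
  fixes S :: "complex^'n^'n"
  assumes p: "positive_op S" and tau: "\<tau> \<noteq> 0"
  shows "(Phi \<tau> e S = S \<longleftrightarrow> sqrt_op S *v e = 0) \<and>
             (sqrt_op S *v e = 0 \<longleftrightarrow> S *v e = 0) \<and>
             (S *v e = 0 \<longleftrightarrow> range ((*v) S) \<subseteq> orth_compl e)"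
proof (intro conjI)
  let ?R = "sqrt_op S"
  have pR: "positive_op ?R" and RR: "?R ** ?R = S" using sqrt_op[OF p] by auto
  have hR: "adjoint_op ?R = ?R" using pR by (rule pos_herm)
  have hS: "adjoint_op S = S" using p by (rule pos_herm)
  show "Phi \<tau> e S = S \<longleftrightarrow> ?R *v e = 0"
    using tau by (simp add: Phi_formula[OF p] ketbra_zero_iff)
  show "?R *v e = 0 \<longleftrightarrow> S *v e = 0"
  proof
    assume "?R *v e = 0"
    moreover have "S *v e = ?R *v (?R *v e)" by (simp add: matrix_vector_mul_assoc RR)
    ultimately show "S *v e = 0" by simp
  next
    assume "S *v e = 0"
    then have "inner e (?R *v (?R *v e)) = 0" by (simp add: matrix_vector_mul_assoc RR)
    then have "inner (?R *v e) (?R *v e) = 0" by (simp add: herm_inner[OF hR])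
    then show "?R *v e = 0" by simp
  qed
  show "S *v e = 0 \<longleftrightarrow> range ((*v) S) \<subseteq> orth_compl e"
  proof
    assume "S *v e = 0"
    then show "range ((*v) S) \<subseteq> orth_compl e"
      by (auto simp: orth_compl_def herm_cinner[OF hS])
  next
    assume "range ((*v) S) \<subseteq> orth_compl e"
    then have "cinner e (S *v (S *v e)) = 0" by (auto simp: orth_compl_def)
    then have "cinner (S *v e) (S *v e) = 0" by (simp add: herm_cinner[OF hS])
    then show "S *v e = 0" by (simp add: cinner_zero_iff)
  qed
qed

lemma cs_unit:
  assumes "norm e = 1"
  shows "(cmod (cinner e y))^2 \<le> (norm y)^2"
proof -
  define a where "a = cinner e y"
  have ee: "cinner e e = 1" using assms by (simp add: cinner_self)
  have ye: "cinner y e = cnj a" by (simp add: a_def cinner_commute[of y e])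
  have "cinner (y - a *s e) (y - a *s e) = cinner y y - a * cnj a"
    by (simp add: cinner_diff_left cinner_diff_right cinner_smult_left cinner_smult_right ee ye
        a_def[symmetric] algebra_simps)
  then have H1: "complex_of_real ((norm (y - a *s e))^2) = complex_of_real ((norm y)^2) - complex_of_real ((cmod a)^2)"
    by (simp only: cinner_self complex_norm_square)
  then have "complex_of_real ((norm (y - a *s e))^2) = complex_of_real ((norm y)^2 - (cmod a)^2)"
    by simp
  then have "(norm (y - a *s e))^2 = (norm y)^2 - (cmod a)^2"
    by (rule of_real_eq_iff[THEN iffD1])
  then show ?thesis unfolding a_def[symmetric] using zero_le_power2[of "norm (y - a *s e)"] by linarith
qed

lemma Phi_pos:
  fixes S :: "complex^'n^'n"
  assumes p: "positive_op S" and e: "norm e = 1" and t0: "0 \<le> \<tau>" and t1: "\<tau> \<le> 1"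
  shows "positive_op (Phi \<tau> e S)"
proof (rule pos_intro)
  let ?R = "sqrt_op S"
  have pR: "positive_op ?R" and RR: "?R ** ?R = S" using sqrt_op[OF p] by auto
  have hR: "adjoint_op ?R = ?R" using pR by (rule pos_herm)
  have hS: "adjoint_op S = S" using p by (rule pos_herm)
  show "adjoint_op (Phi \<tau> e S) = Phi \<tau> e S"
    by (simp add: Phi_formula[OF p] adjoint_diff adjoint_scaleR adjoint_ketbra hS)
  fix x
  have qS: "inner x (S *v x) = (norm (?R *v x))^2"
  proof -
    have "inner x (S *v x) = inner x (?R *v (?R *v x))" by (simp add: matrix_vector_mul_assoc RR)
    also have "\<dots> = inner (?R *v x) (?R *v x)" by (rule herm_inner[OF hR])
    finally show ?thesis by (simp add: power2_norm_eq_inner)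
  qed
  have A: "inner x (Phi \<tau> e S *v x) = inner x (S *v x) - \<tau> * (cmod (cinner e (?R *v x)))^2"
    by (simp add: Phi_formula[OF p] matrix_vector_mult_diff_rdistrib scaleR_mv inner_diff_right
        ketbra_q herm_cinner[OF hR])
  have B: "\<tau> * (cmod (cinner e (?R *v x)))^2 \<le> \<tau> * (norm (?R *v x))^2"
    using cs_unit[OF e, of "?R *v x"] t0 by (simp add: mult_left_mono)
  have C: "\<tau> * (norm (?R *v x))^2 \<le> 1 * (norm (?R *v x))^2"
    using t1 by (intro mult_right_mono) auto
  show "0 \<le> inner x (Phi \<tau> e S *v x)" using A B C qS by linarith
qed



lemma polar:
  fixes A :: "complex^'n^'n"
  assumes h: "adjoint_op A = A"
  shows "inner x (A *v y) = (inner (x + y) (A *v (x + y)) - inner (x - y) (A *v (x - y))) / 4"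
  using herm_inner[OF h, of x y]
  by (simp add: matrix_vector_right_distrib matrix_vector_mult_diff_distrib inner_add_left
          inner_add_right inner_diff_left inner_diff_right inner_commute algebra_simps)

lemma cinner_Complex: "cinner x y = Complex (inner x y) (inner (\<i> *s x) y)"
  by (simp add: complex_eq_iff cinner_Re[symmetric] cinner_smult_left)

lemma entry: "cinner (axis i 1) ((A::complex^'n^'n) *v axis j 1) = A $ i $ j"
  by (simp add: cinner_def axis_def matrix_vector_mult_def if_distrib if_distribR cong: if_cong)

lemma tendsto_mv: "(f \<longlongrightarrow> (L::complex^'n^'n)) F \<Longrightarrow> ((\<lambda>n. f n *v x) \<longlongrightarrow> L *v x) F"
  unfolding matrix_vector_mult_def
  by (intro vec_tendstoI) (simp add: tendsto_intros)

lemma tendsto_adj: "(f \<longlongrightarrow> (L::complex^'n^'n)) F \<Longrightarrow> ((\<lambda>n. adjoint_op (f n)) \<longlongrightarrow> adjoint_op L) F"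
  unfolding adjoint_op_def
  by (intro vec_tendstoI) (simp add: tendsto_intros)

definition tr :: "complex^'n^'n \<Rightarrow> real" where "tr A = (\<Sum>i\<in>UNIV. Re (A $ i $ i))"

lemma tr_pos: "positive_op A \<Longrightarrow> 0 \<le> tr A"
  unfolding tr_def
  by (intro sum_nonneg) (metis entry cinner_Re pos_q)

lemma tr_ketbra: "tr (ketbra u u) = inner u u"
  by (simp add: tr_def ketbra_def inner_vec_def inner_complex_def)

lemma tr_diff: "tr (A - r *\<^sub>R B) = tr A - r * tr B"
  by (simp add: tr_def sum_subtractf sum_distrib_left)







lemma part3:
  fixes e :: "complex^'n" and T :: "nat \<Rightarrow> complex^'n^'n"
  assumes e: "norm e = 1" and t0: "0 < \<tau>" and t1: "\<tau> < 1"
    and T0: "positive_op (T 0)" and rec: "\<forall>n. T (Suc n) = Phi \<tau> e (T n)"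
  shows "\<exists>L. T \<longlonglongrightarrow> L \<and> positive_op L \<and> L *v e = 0"
proof -
  have pT: "positive_op (T n)" for n
  proof (induction n)
    case 0 then show ?case by (rule T0)
  next
    case (Suc n) then show ?case using rec Phi_pos[OF _ e] t0 t1 by simp
  qed
  have hT: "adjoint_op (T n) = T n" for n using pT pos_herm by blast
  define u where "u n = sqrt_op (T n) *v e" for n
  have Tsuc: "T (Suc n) = T n - \<tau> *\<^sub>R ketbra (u n) (u n)" for n
    using rec Phi_formula[OF pT] by (simp add: u_def)
  have qsuc: "inner x (T (Suc n) *v x) = inner x (T n *v x) - \<tau> * (cmod (cinner (u n) x))^2" for x n
    by (simp add: Tsuc matrix_vector_mult_diff_rdistrib scaleR_mv inner_diff_right ketbra_q)
  have dec: "decseq (\<lambda>n. inner x (T n *v x))" for x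
    by (rule decseq_SucI) (simp add: qsuc t0 less_imp_le)
  have conv: "\<exists>l. (\<lambda>n. inner x (T n *v x)) \<longlonglongrightarrow> l" for x
  proof -
    have "\<forall>n. 0 \<le> inner x (T n *v x)" using pos_q[OF pT] by blast
    then show ?thesis by (rule decseq_convergent[OF dec]) blast
  qed
  have conv2: "\<exists>l. (\<lambda>n. inner x (T n *v y)) \<longlonglongrightarrow> l" for x y
  proof -
    obtain l1 where l1: "(\<lambda>n. inner (x + y) (T n *v (x + y))) \<longlonglongrightarrow> l1" using conv by blast
    obtain l2 where l2: "(\<lambda>n. inner (x - y) (T n *v (x - y))) \<longlonglongrightarrow> l2" using conv by blast
    have "(\<lambda>n. (inner (x + y) (T n *v (x + y)) - inner (x - y) (T n *v (x - y))) / 4) \<longlonglongrightarrow> (l1 - l2) / 4"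
      by (auto intro!: tendsto_intros l1 l2)
    moreover have "(\<lambda>n. inner x (T n *v y)) = (\<lambda>n. (inner (x + y) (T n *v (x + y)) - inner (x - y) (T n *v (x - y))) / 4)"
      by (rule ext) (rule polar[OF hT])
    ultimately show ?thesis by (intro exI[of _ "(l1 - l2) / 4"]) simp
  qed
  have conv3: "\<exists>c. (\<lambda>n. T n $ i $ j) \<longlonglongrightarrow> c" for i j
  proof -
    let ?a = "axis i 1 :: complex^'n" and ?b = "axis j 1 :: complex^'n"
    obtain l1 where l1: "(\<lambda>n. inner ?a (T n *v ?b)) \<longlonglongrightarrow> l1" using conv2 by blast
    obtain l2 where l2: "(\<lambda>n. inner (\<i> *s ?a) (T n *v ?b)) \<longlonglongrightarrow> l2" using conv2 by blast
    have "(\<lambda>n. Complex (inner ?a (T n *v ?b)) (inner (\<i> *s ?a) (T n *v ?b))) \<longlonglongrightarrow> Complex l1 l2"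
      by (rule tendsto_Complex[OF l1 l2])
    moreover have "(\<lambda>n. T n $ i $ j) = (\<lambda>n. Complex (inner ?a (T n *v ?b)) (inner (\<i> *s ?a) (T n *v ?b)))"
      by (rule ext) (simp only: cinner_Complex[symmetric] entry)
    ultimately show ?thesis by (intro exI[of _ "Complex l1 l2"]) simp
  qed
  define L where "L = (\<chi> i j. lim (\<lambda>n. T n $ i $ j))"
  have TL: "T \<longlonglongrightarrow> L"
  proof (intro vec_tendstoI)
    fix i j
    show "(\<lambda>n. T n $ i $ j) \<longlonglongrightarrow> L $ i $ j"
      using conv3[of i j] by (simp add: L_def convergent_LIMSEQ_iff[symmetric] convergent_def)
  qed
  have "(\<lambda>n. adjoint_op (T n)) \<longlonglongrightarrow> adjoint_op L" by (rule tendsto_adj[OF TL])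
  then have "T \<longlonglongrightarrow> adjoint_op L" by (simp only: hT)
  then have "L = adjoint_op L" by (rule LIMSEQ_unique[OF TL])
  then have hL: "adjoint_op L = L" by (rule sym)
  have qL: "(\<lambda>n. inner x (T n *v x)) \<longlonglongrightarrow> inner x (L *v x)" for x
    by (intro tendsto_inner tendsto_const tendsto_mv[OF TL])
  have qLpos: "0 \<le> inner x (L *v x)" for x
    using qL[of x] pos_q[OF pT] by (intro LIMSEQ_le_const) auto
  have pL: "positive_op L" using hL qLpos by (rule pos_intro)
  have nu: "inner (u n) (u n) = inner e (T n *v e)" for n
  proof -
    have pR: "positive_op (sqrt_op (T n))" and RR: "sqrt_op (T n) ** sqrt_op (T n) = T n"
      using sqrt_op[OF pT] by auto
    have "inner e (T n *v e) = inner e (sqrt_op (T n) *v (sqrt_op (T n) *v e))"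
      by (simp add: matrix_vector_mul_assoc RR)
    also have "\<dots> = inner (u n) (u n)" unfolding u_def by (rule herm_inner[OF pos_herm[OF pR]])
    finally show ?thesis by simp
  qed
  have trs: "tr (T N) = tr (T 0) - \<tau> * (\<Sum>n<N. inner e (T n *v e))" for N
  proof (induction N)
    case 0 then show ?case by simp
  next
    case (Suc N) then show ?case by (simp add: Tsuc tr_diff tr_ketbra nu algebra_simps)
  qed
  let ?l = "inner e (L *v e)"
  have le: "?l \<le> inner e (T n *v e)" for n by (rule decseq_ge[OF dec qL])
  have bnd: "\<tau> * (real N * ?l) \<le> tr (T 0)" for N
  proof -
    have "real N * ?l = (\<Sum>n<N. ?l)" by simp
    also have "\<dots> \<le> (\<Sum>n<N. inner e (T n *v e))" by (intro sum_mono le)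
    finally have s1: "real N * ?l \<le> (\<Sum>n<N. inner e (T n *v e))" .
    have "\<tau> * (real N * ?l) \<le> \<tau> * (\<Sum>n<N. inner e (T n *v e))"
      by (rule mult_left_mono[OF s1]) (use t0 in linarith)
    also have "\<dots> = tr (T 0) - tr (T N)" using trs[of N] by linarith
    also have "\<dots> \<le> tr (T 0)" using tr_pos[OF pT] by simp
    finally show ?thesis .
  qed
  have "?l \<le> 0"
  proof (rule ccontr)
    assume "\<not> ?l \<le> 0"
    then have lp: "?l > 0" by simp
    obtain N where N: "tr (T 0) / (\<tau> * ?l) < real N" using reals_Archimedean2 by blast
    have "tr (T 0) < real N * (\<tau> * ?l)" using N lp t0 by (simp add: divide_less_eq)
    with bnd[of N] show False by (simp add: algebra_simps)
  qed
  then have "?l = 0" using qLpos[of e] by simp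
  then have "L *v e = 0" using pos_null[OF hL allI[OF qLpos]] by blast
  with TL pL show ?thesis by blast
qed




theorem proposition4p3:
  fixes e :: "complex^'n" and \<tau> :: real
  assumes "norm e = 1" and "0 < \<tau>" and "\<tau> < 1"
  shows "(\<forall>S. positive_op S \<longrightarrow>
            ((Phi \<tau> e S = S \<longleftrightarrow> sqrt_op S *v e = 0) \<and>
             (sqrt_op S *v e = 0 \<longleftrightarrow> S *v e = 0) \<and>
             (S *v e = 0 \<longleftrightarrow> range ((*v) S) \<subseteq> orth_compl e)))
       \<and> (\<forall>S. positive_op S \<and> range ((*v) S) \<subseteq> orth_compl e \<longrightarrow> Phi \<tau> e S = S)
       \<and> (\<forall>T :: nat \<Rightarrow> complex^'n^'n. positive_op (T 0) \<and> (\<forall>n. T (Suc n) = Phi \<tau> e (T n)) \<longrightarrow>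
            convergent T \<and> Phi \<tau> e (lim T) = lim T \<and> lim T *v e = 0
            \<and> range ((*v) (lim T)) \<subseteq> orth_compl e)"
proof -
  have tau: "\<tau> \<noteq> 0" using assms by simp
  have P1: "\<forall>S. positive_op S \<longrightarrow>
            ((Phi \<tau> e S = S \<longleftrightarrow> sqrt_op S *v e = 0) \<and>
             (sqrt_op S *v e = 0 \<longleftrightarrow> S *v e = 0) \<and>
             (S *v e = 0 \<longleftrightarrow> range ((*v) S) \<subseteq> orth_compl e))"
    using part1[OF _ tau] by blast
  moreover have P2: "\<forall>S. positive_op S \<and> range ((*v) S) \<subseteq> orth_compl e \<longrightarrow> Phi \<tau> e S = S"
    using P1 by blast
  moreover have "\<forall>T :: nat \<Rightarrow> complex^'n^'n. positive_op (T 0) \<and> (\<forall>n. T (Suc n) = Phi \<tau> e (T n)) \<longrightarrow>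
            convergent T \<and> Phi \<tau> e (lim T) = lim T \<and> lim T *v e = 0
            \<and> range ((*v) (lim T)) \<subseteq> orth_compl e"
  proof (intro allI impI)
    fix T :: "nat \<Rightarrow> complex^'n^'n"
    assume H: "positive_op (T 0) \<and> (\<forall>n. T (Suc n) = Phi \<tau> e (T n))"
    obtain L where TL: "T \<longlonglongrightarrow> L" and pL: "positive_op L" and Le: "L *v e = 0"
      using part3[OF assms(1) assms(2) assms(3)] H by blast
    have lT: "lim T = L" using TL by (rule limI)
    have c: "convergent T" using TL by (auto simp: convergent_def)
    show "convergent T \<and> Phi \<tau> e (lim T) = lim T \<and> lim T *v e = 0
            \<and> range ((*v) (lim T)) \<subseteq> orth_compl e"
      using c lT pL Le P1 by auto
  qed
  ultimately show ?thesis by blast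
qed

end
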